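(* Let $\beta:\mathbb R\to\mathbb R$ be piecewise continuous with $\beta(-t)^2=\beta(t)^2$ for all $t$, and let $\Lambda(t)=\begin{pmatrix}0&1\\-\beta(t)^2&0\end{pmatrix}$. For $s\le t$ let $b(t,s)$ be the real $2\times2$ matrix solving $\frac{\partial}{\partial t}b(t,s)=\Lambda(t)b(t,s)$, $b(s,s)=\mathbb 1$, and set $b(t):=b(t,-t)$ for $t\ge0$. If for some $t\ge0$ one has $\mathrm{Tr}\,b(t)=2$, then $b(t)=\begin{pmatrix}1&0\\-a&1\end{pmatrix}$ for some $a\in\mathbb R$ or $b(t)=\begin{pmatrix}1&\tau\\0&1\end{pmatrix}$ for some $\tau\in\mathbb R$; if $\mathrm{Tr}\,b(t)=-2$, then $b(t)=-\begin{pmatrix}1&0\\-a&1\end{pmatrix}$ for some $a\in\mathbb R$ or $b(t)=-\begin{pmatrix}1&\tau\\0&1\end{pmatrix}$ for some $\tau\in\mathbb R$. *)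

theory Defs
  imports "HOL-Analysis.Analysis"
begin

definition piecewise_continuous :: "(real \<Rightarrow> real) \<Rightarrow> bool" where
  "piecewise_continuous f \<longleftrightarrow>
     (\<forall>a b. \<exists>S. finite S \<and> (\<forall>x\<in>{a..b} - S. isCont f x)) \<and>
     (\<forall>x. (\<exists>l. (f \<longlongrightarrow> l) (at_left x)) \<and> (\<exists>r. (f \<longlongrightarrow> r) (at_right x)))"

definition mat2 :: "real \<Rightarrow> real \<Rightarrow> real \<Rightarrow> real \<Rightarrow> real^2^2" where
  "mat2 p q r s = (\<chi> i j. if i = 1 then (if j = 1 then p else q) else (if j = 1 then r else s))"

definition Lam :: "(real \<Rightarrow> real) \<Rightarrow> real \<Rightarrow> real^2^2" where
  "Lam \<beta> t = mat2 0 1 (- ((\<beta> t)^2)) 0"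

text \<open>b is the propagator of d/dt b(t,s) = Lambda(t) b(t,s), b(s,s) = 1, for s \<le> t,
  understood (as usual for piecewise continuous coefficients) in the integral sense.\<close>
definition is_propagator :: "(real \<Rightarrow> real) \<Rightarrow> (real \<Rightarrow> real \<Rightarrow> real^2^2) \<Rightarrow> bool" where
  "is_propagator \<beta> b \<longleftrightarrow>
     (\<forall>s t. s \<le> t \<longrightarrow>
        (\<lambda>r. Lam \<beta> r ** b r s) integrable_on {s..t} \<and>
        b t s = mat 1 + integral {s..t} (\<lambda>r. Lam \<beta> r ** b r s))"

end

theory Submission
  imports Defs
begin

lemma Lam_mult: "(Lam \<beta> x ** M) $ 1 $ j = M $ 2 $ j" "(Lam \<beta> x ** M) $ 2 $ j = - ((\<beta> x)^2) * M $ 1 $ j"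
  unfolding Lam_def mat2_def matrix_matrix_mult_def by (simp_all add: sum_2)

lemma deriv_int:
  fixes g :: "real \<Rightarrow> real"
  assumes "g integrable_on {a..b}" "x \<in> {a<..<b}" "isCont g x"
  shows "((\<lambda>u. integral {a..u} g) has_real_derivative g x) (at x)"
proof -
  have "((\<lambda>u. integral {a..u} g) has_vector_derivative g x) (at x within ({a..b} - {}))"
    by (rule integral_has_vector_derivative_continuous_at)
       (use assms in \<open>auto intro: continuous_at_imp_continuous_at_within\<close>)
  moreover have i: "x \<in> interior ({a..b} - {})" using assms by simp
  ultimately have "((\<lambda>u. integral {a..u} g) has_vector_derivative g x) (at x)"
    by (simp only: at_within_interior[OF i])
  then show ?thesis by (simp only: has_real_derivative_iff_has_vector_derivative)
qed

lemma contP_lemma: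
  fixes g :: "real \<Rightarrow> real"
  assumes "g integrable_on {a..c}" "\<And>r. r \<in> {a..c} \<Longrightarrow> p r = k + integral {a..r} g"
  shows "continuous_on {a..c} p"
proof -
  have "continuous_on {a..c} (\<lambda>r. k + integral {a..r} g)"
    by (intro continuous_intros indefinite_integral_continuous_1 assms(1))
  then show ?thesis by (rule continuous_on_eq) (simp add: assms(2))
qed

lemma deriv_lemma:
  fixes g :: "real \<Rightarrow> real"
  assumes "g integrable_on {a..c}" "\<And>r. r \<in> {a..c} \<Longrightarrow> p r = k + integral {a..r} g"
    and x: "x \<in> {a<..<c}" and "isCont g x"
  shows "(p has_real_derivative g x) (at x)"
proof -
  have "((\<lambda>u. k + integral {a..u} g) has_real_derivative 0 + g x) (at x)"
    by (rule DERIV_add[OF DERIV_const deriv_int[OF assms(1) x assms(4)]])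
  then have "((\<lambda>u. k + integral {a..u} g) has_real_derivative g x) (at x)" by simp
  then show ?thesis
    by (rule has_field_derivative_transform_within_open[where S="{a<..<c}"])
       (use x assms(2) in auto)
qed
lemma bl2: "bounded_linear (\<lambda>M::real^2^2. M $ i $ j)"
    by (rule bounded_linear_compose[OF bounded_linear_vec_nth bounded_linear_vec_nth])
lemma Pint_lemma:
  fixes G :: "real \<Rightarrow> real^2^2"
  assumes intG: "G integrable_on {a..c}" and r: "r \<in> {a..c}" and B: "B = mat 1 + integral {a..r} G"
  shows "B $ i $ j = mat 1 $ i $ j + integral {a..r} (\<lambda>x. G x $ i $ j)"
proof -
  have i: "G integrable_on {a..r}"
    by (rule integrable_subinterval_real[OF intG]) (use r in auto)
  have e1: "integral {a..r} (\<lambda>x. G x $ i $ j) = integral {a..r} G $ i $ j"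
    using integral_linear[OF i bl2[of i j]] by (simp only: o_def)
  show ?thesis
    unfolding B e1 by (simp only: vector_add_component)
qed
lemma const_lemma:
  fixes f :: "real \<Rightarrow> real"
  assumes "finite K" "continuous_on {a..b} f"
    "\<And>x. x \<in> {a<..<b} - K \<Longrightarrow> (f has_real_derivative 0) (at x)"
    "x \<in> {a..b}"
  shows "f x = f a"
proof -
  have fin: "finite (K \<union> {a,b})" using assms by auto
  have der: "(f has_derivative (\<lambda>h. 0)) (at y within {a..b})"
    if y: "y \<in> {a..b} - (K \<union> {a,b})" for y
  proof -
    have "(f has_real_derivative 0) (at y)" using assms(3) y by auto
    then have "(f has_real_derivative 0) (at y within {a..b})"
      by (rule has_field_derivative_at_within)
    then show ?thesis by (simp add: has_field_derivative_def lambda_zero)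
  qed
  show ?thesis
    by (rule has_derivative_zero_unique_strong_interval[OF fin assms(2) refl der assms(4)])
qed

lemma refl_d: "((\<lambda>r. f (-r)) has_real_derivative - D') (at x)"
    if "(f has_real_derivative D') (at (-x))" for f :: "real \<Rightarrow> real" and D' x
proof -
  have u: "(uminus has_real_derivative -1) (at x)" by (auto intro!: derivative_eq_intros)
  have "((\<lambda>r. f (-r)) has_real_derivative D' * (-1)) (at x)"
    using DERIV_chain2[where f=f and g=uminus and x=x, OF that u] by simp
  then show ?thesis by simp
qed

lemma core:
  fixes P :: "2 \<Rightarrow> 2 \<Rightarrow> real \<Rightarrow> real" and \<beta> :: "real\<Rightarrow>real" and K :: "real set" and t :: real
  assumes K: "finite K" and t: "t \<ge> 0"
   and contP: "\<And>i j. continuous_on {-t..t} (P i j)"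
   and d1: "\<And>j x. x \<in> {-t<..<t} \<Longrightarrow> (P 1 j has_real_derivative P 2 j x) (at x)"
   and d2: "\<And>j x. x \<in> {-t<..<t} \<Longrightarrow> isCont \<beta> x \<Longrightarrow> (P 2 j has_real_derivative - ((\<beta> x)^2) * P 1 j x) (at x)"
   and good: "\<And>x. x \<in> {-t<..<t} - K \<Longrightarrow> isCont \<beta> x \<and> isCont \<beta> (-x)"
   and ev: "\<forall>u. (\<beta> (-u))^2 = (\<beta> u)^2"
  shows "P 1 1 t * P 2 2 t - P 1 2 t * P 2 1 t = P 1 1 (-t) * P 2 2 (-t) - P 1 2 (-t) * P 2 1 (-t)"
    and "P 1 1 t * P 2 2 (-t) + P 2 1 t * P 1 2 (-t) = P 1 1 (-t) * P 2 2 t + P 2 1 (-t) * P 1 2 t"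
proof -
  have tt: "t \<in> {-t..t}" using t by auto
  define D where "D r = P 1 1 r * P 2 2 r - P 1 2 r * P 2 1 r" for r
  have "D t = D (-t)"
  proof (rule const_lemma[where f=D and a="-t" and b=t and x=t, OF K _ _ tt])
    show "continuous_on {-t..t} D" unfolding D_def by (intro continuous_intros contP)
    fix x assume x: "x \<in> {-t<..<t} - K"
    then have xi: "x \<in> {-t<..<t}" and c: "isCont \<beta> x" using good by auto
    have "(D has_real_derivative
        (P 2 1 x * P 2 2 x + (- ((\<beta> x)^2) * P 1 2 x) * P 1 1 x)
        - (P 2 2 x * P 2 1 x + (- ((\<beta> x)^2) * P 1 1 x) * P 1 2 x)) (at x)"
      unfolding D_def[abs_def]
      by (rule DERIV_diff[OF DERIV_mult[OF d1[OF xi] d2[OF xi c]] DERIV_mult[OF d1[OF xi] d2[OF xi c]]])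
    then show "(D has_real_derivative 0) (at x)" by (simp add: algebra_simps)
  qed
  then show "P 1 1 t * P 2 2 t - P 1 2 t * P 2 1 t = P 1 1 (-t) * P 2 2 (-t) - P 1 2 (-t) * P 2 1 (-t)"
    unfolding D_def .
  define E where "E r = P 1 1 r * P 2 2 (-r) + P 2 1 r * P 1 2 (-r)" for r
  have "E t = E (-t)"
  proof (rule const_lemma[where f=E and a="-t" and b=t and x=t, OF K _ _ tt])
    have cm: "continuous_on {-t..t} (\<lambda>r. P i j (-r))" for i j
    proof -
      have "continuous_on {-t..t} (P i j \<circ> uminus)"
        by (rule continuous_on_compose) (auto intro!: continuous_intros continuous_on_subset[OF contP])
      then show ?thesis by (simp add: o_def)
    qed
    show "continuous_on {-t..t} E" unfolding E_def by (intro continuous_intros contP cm)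
    fix x assume x: "x \<in> {-t<..<t} - K"
    then have xi: "x \<in> {-t<..<t}" and c: "isCont \<beta> x" and c2: "isCont \<beta> (-x)" using good by auto
    have mx: "-x \<in> {-t<..<t}" using xi by auto
    have e1: "((\<lambda>r. P 2 2 (-r)) has_real_derivative - (- ((\<beta> (-x))^2) * P 1 2 (-x))) (at x)"
      by (rule refl_d[OF d2[OF mx c2]])
    have e2: "((\<lambda>r. P 1 2 (-r)) has_real_derivative - P 2 2 (-x)) (at x)"
      by (rule refl_d[OF d1[OF mx]])
    have "(E has_real_derivative
        (P 2 1 x * P 2 2 (-x) + (- (- ((\<beta> (-x))^2) * P 1 2 (-x))) * P 1 1 x)
        + ((- ((\<beta> x)^2) * P 1 1 x) * P 1 2 (-x) + (- P 2 2 (-x)) * P 2 1 x)) (at x)"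
      unfolding E_def[abs_def]
      by (rule DERIV_add[OF DERIV_mult[OF d1[OF xi] e1] DERIV_mult[OF d2[OF xi c] e2]])
    moreover have "(\<beta> (-x))^2 = (\<beta> x)^2" using ev by blast
    ultimately show "(E has_real_derivative 0) (at x)" by (simp add: algebra_simps)
  qed
  then show "P 1 1 t * P 2 2 (-t) + P 2 1 t * P 1 2 (-t) = P 1 1 (-t) * P 2 2 t + P 2 1 (-t) * P 1 2 t"
    unfolding E_def by simp
qed
lemma mat2_eta: "(M::real^2^2) = mat2 (M$1$1) (M$1$2) (M$2$1) (M$2$2)"
  unfolding mat2_def by (simp add: vec_eq_iff forall_2)
lemma tr2: "trace (M::real^2^2) = M$1$1 + M$2$2" unfolding trace_def by (simp add: sum_2)
lemma neg_mat2: "- mat2 p q r s = mat2 (-p) (-q) (-r) (-s)"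
  unfolding mat2_def by (simp add: vec_eq_iff forall_2)
lemma final:
  fixes X :: "real^2^2"
  assumes det: "X$1$1 * X$2$2 - X$1$2 * X$2$1 = 1" and eq: "X$1$1 = X$2$2"
  shows "(trace X = 2 \<longrightarrow>
            (\<exists>a. X = mat2 1 0 (-a) 1) \<or> (\<exists>\<tau>. X = mat2 1 \<tau> 0 1)) \<and>
         (trace X = -2 \<longrightarrow>
            (\<exists>a. X = - mat2 1 0 (-a) 1) \<or> (\<exists>\<tau>. X = - mat2 1 \<tau> 0 1))"
proof (intro conjI impI)
  assume "trace X = 2"
  then have a: "X$1$1 = 1" "X$2$2 = 1" using eq by (auto simp: tr2)
  then have "X$1$2 * X$2$1 = 0" using det by simp
  then have "X$1$2 = 0 \<or> X$2$1 = 0" by simp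
  then show "(\<exists>a. X = mat2 1 0 (-a) 1) \<or> (\<exists>\<tau>. X = mat2 1 \<tau> 0 1)"
  proof
    assume "X$1$2 = 0"
    then have "X = mat2 1 0 (- (- X$2$1)) 1" using mat2_eta[of X] a by simp
    then show ?thesis by blast
  next
    assume "X$2$1 = 0"
    then have "X = mat2 1 (X$1$2) 0 1" using mat2_eta[of X] a by simp
    then show ?thesis by blast
  qed
next
  assume "trace X = -2"
  then have a: "X$1$1 = -1" "X$2$2 = -1" using eq by (auto simp: tr2)
  then have "X$1$2 * X$2$1 = 0" using det by simp
  then have "X$1$2 = 0 \<or> X$2$1 = 0" by simp
  then show "(\<exists>a. X = - mat2 1 0 (-a) 1) \<or> (\<exists>\<tau>. X = - mat2 1 \<tau> 0 1)"
  proof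
    assume "X$1$2 = 0"
    then have "X = - mat2 1 0 (- (X$2$1)) 1" using mat2_eta[of X] a by (simp add: neg_mat2)
    then show ?thesis by blast
  next
    assume "X$2$1 = 0"
    then have "X = - mat2 1 (- X$1$2) 0 1" using mat2_eta[of X] a by (simp add: neg_mat2)
    then show ?thesis by blast
  qed
qed
theorem proposition4:
  fixes \<beta> :: "real \<Rightarrow> real" and b :: "real \<Rightarrow> real \<Rightarrow> real^2^2" and t :: real
  assumes "piecewise_continuous \<beta>"
    and "\<forall>u. (\<beta> (-u))^2 = (\<beta> u)^2"
    and "is_propagator \<beta> b"
    and "t \<ge> 0"
  shows "(trace (b t (-t)) = 2 \<longrightarrow>
            (\<exists>a. b t (-t) = mat2 1 0 (-a) 1) \<or> (\<exists>\<tau>. b t (-t) = mat2 1 \<tau> 0 1)) \<and>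
         (trace (b t (-t)) = -2 \<longrightarrow>
            (\<exists>a. b t (-t) = - mat2 1 0 (-a) 1) \<or> (\<exists>\<tau>. b t (-t) = - mat2 1 \<tau> 0 1))"
proof -
  define P where "P i j r = b r (-t) $ i $ j" for i j r
  define G where "G = (\<lambda>x. Lam \<beta> x ** b x (-t))"
  have hprop: "\<And>s u. s \<le> u \<Longrightarrow> (\<lambda>r. Lam \<beta> r ** b r s) integrable_on {s..u} \<and>
        b u s = mat 1 + integral {s..u} (\<lambda>r. Lam \<beta> r ** b r s)"
    using assms(3) unfolding is_propagator_def by blast
  have tt: "-t \<le> t" using assms(4) by simp
  have intG: "G integrable_on {-t..t}" unfolding G_def by (rule conjunct1[OF hprop[OF tt]])
  have beq: "b r (-t) = mat 1 + integral {-t..r} G" if "r \<in> {-t..t}" for r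
  proof -
    have rt: "-t \<le> r" using that by simp
    show ?thesis unfolding G_def by (rule conjunct2[OF hprop[OF rt]])
  qed
  have intGc: "(\<lambda>x. G x $ i $ j) integrable_on {-t..t}" for i j
    using integrable_linear[OF intG bl2[of i j]] by (simp only: o_def)
  have Pint: "P i j r = mat 1 $ i $ j + integral {-t..r} (\<lambda>x. G x $ i $ j)"
    if "r \<in> {-t..t}" for i j r
    unfolding P_def by (rule Pint_lemma[OF intG that beq[OF that]])
  have contP: "continuous_on {-t..t} (P i j)" for i j
    by (rule contP_lemma[where p="P i j", OF intGc Pint[of _ i j]])
  have G1: "G x $ 1 $ j = P 2 j x" for x j
    unfolding G_def P_def by (rule Lam_mult(1))
  have G2: "G x $ 2 $ j = - ((\<beta> x)^2) * P 1 j x" for x j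
    unfolding G_def P_def by (rule Lam_mult(2))
  have cP: "isCont (P i j) x" if "x \<in> {-t<..<t}" for i j x
    using continuous_on_interior[OF contP[of i j]] that by auto
  have d1: "(P 1 j has_real_derivative P 2 j x) (at x)" if x: "x \<in> {-t<..<t}" for j x
  proof -
    have e: "(\<lambda>x. G x $ 1 $ j) = P 2 j" by (simp add: G1 fun_eq_iff)
    have c: "isCont (\<lambda>x. G x $ 1 $ j) x" unfolding e by (rule cP[OF x])
    have "(P 1 j has_real_derivative G x $ 1 $ j) (at x)"
      by (rule deriv_lemma[where p="P 1 j", OF intGc Pint[of _ 1 j] x c])
    then show ?thesis by (simp only: G1)
  qed
  have d2: "(P 2 j has_real_derivative - ((\<beta> x)^2) * P 1 j x) (at x)"
    if x: "x \<in> {-t<..<t}" and cb: "isCont \<beta> x" for j x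
  proof -
    have e: "(\<lambda>x. G x $ 2 $ j) = (\<lambda>x. - ((\<beta> x)^2) * P 1 j x)" by (simp add: G2 fun_eq_iff)
    have c: "isCont (\<lambda>x. G x $ 2 $ j) x" unfolding e
      using cP[OF x, of 1 j] cb by (intro continuous_intros)
    have "(P 2 j has_real_derivative G x $ 2 $ j) (at x)"
      by (rule deriv_lemma[where p="P 2 j", OF intGc Pint[of _ 2 j] x c])
    then show ?thesis by (simp only: G2)
  qed
  have P0: "P i j (-t) = mat 1 $ i $ j" for i j
  proof -
    have "-t \<in> {-t..t}" using assms(4) by simp
    from Pint[OF this, of i j] show ?thesis by simp
  qed
  have pc: "\<forall>a b. \<exists>S. finite S \<and> (\<forall>x\<in>{a..b} - S. isCont \<beta> x)"
    using assms(1) unfolding piecewise_continuous_def by (rule conjunct1)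
  obtain S where S: "finite S" "\<forall>x\<in>{-t..t} - S. isCont \<beta> x"
    using spec[OF spec[OF pc, of "-t"], of t] by blast
  define K where "K = S \<union> uminus ` S"
  have K: "finite K" using S by (simp add: K_def)
  have good: "isCont \<beta> x \<and> isCont \<beta> (-x)" if x: "x \<in> {-t<..<t} - K" for x
  proof -
    have n1: "x \<notin> S" using x K_def by auto
    have n2: "-x \<notin> S"
    proof
      assume "-x \<in> S"
      then have "-(-x) \<in> uminus ` S" by (rule imageI)
      then show False using x K_def by auto
    qed
    show ?thesis using S(2) n1 n2 x by auto
  qed
  note c = core[of K t P \<beta>, OF K assms(4) contP d1 d2 good assms(2)]
  have I: "(mat 1 :: real^2^2) $ 1 $ 1 = 1" "(mat 1 :: real^2^2) $ 2 $ 2 = 1"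
     "(mat 1 :: real^2^2) $ 1 $ 2 = 0" "(mat 1 :: real^2^2) $ 2 $ 1 = 0"
    by (simp_all add: mat_def)
  have Pm: "P 1 1 (-t) = 1" "P 2 2 (-t) = 1" "P 1 2 (-t) = 0" "P 2 1 (-t) = 0"
    using P0 I by simp_all
  have det1: "P 1 1 t * P 2 2 t - P 1 2 t * P 2 1 t = 1" using c(1) Pm by simp
  have eqd: "P 1 1 t = P 2 2 t" using c(2) Pm by simp
  show ?thesis
    by (rule final) (use det1 eqd in \<open>simp_all add: P_def\<close>)
qed

end
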